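(* If $Y^*\in\mathcal L^1(\mathcal Q)$ and $\rho_{\mathcal Q}$ is continuous from above at $0$, then (i) $\sup_{\tau\in\mathcal T}\inf_{\mathrm Q\in\overline{\mathcal Q}}\mathbb E_{\mathrm Q}[Y_\tau]=\sup_{\tau\in\mathcal T_f}\inf_{\mathrm Q\in\overline{\mathcal Q}}\mathbb E_{\mathrm Q}[Y_\tau]$; (ii) $\inf_{\mathrm Q\in\overline{\mathcal Q}}\sup_{\tau\in\mathcal T}\mathbb E_{\mathrm Q}[Y_\tau]=\inf_{\mathrm Q\in\overline{\mathcal Q}}\sup_{\tau\in\mathcal T_f}\mathbb E_{\mathrm Q}[Y_\tau]$.
   Context: Let $(\Omega,\mathcal F,(\mathcal F_t)_{0\le t\le T},\mathrm P)$ be a filtered probability space ($0<T<\infty$) with right-continuous filtration, $\mathcal F=\mathcal F_T$, $\mathcal F_0$ trivial and containing all $\mathrm P$-null sets. $\mathcal T$ is the set of stopping times $\tau\le T$ and $\mathcal T_f$ the set of those with finite range. $\mathcal Q$ is a nonempty set of probability measures on $\mathcal F$, each absolutely continuous w.r.t. $\mathrm P$. $\mathcal L^1(\mathcal Q)$ is the set of random variables $X$ with $\sup_{\mathrm Q\in\mathcal Q}\mathbb E_{\mathrm Q}[|X|]<\infty$. $Y=(Y_t)_{0\le t\le T}$ is a right-continuous adapted process with bounded paths, quasi left-uppersemicontinuous w.r.t. $\mathrm P$, and $Y^*:=\sup_{t\in[0,T]}|Y_t|$. $\mathcal X$ is the set of random variables $X$ with $|X|\le C(Y^*+1)$ $\mathrm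 P$-a.s. for some $C>0$; $\rho_{\mathcal Q}(X)=\sup_{\mathrm Q\in\mathcal Q}\mathbb E_{\mathrm Q}[X]$ for $X\in\mathcal X$; $\rho_{\mathcal Q}$ is continuous from above at $0$ if $\rho_{\mathcal Q}(X_n)\searrow0$ whenever $X_n\in\mathcal X$, $X_n\searrow0$ $\mathrm P$-a.s. $\overline{\mathcal Q}$ is the set of probability measures $\mathrm Q$ on $\mathcal F$ such that every $X\in\mathcal X$ is $\mathrm Q$-integrable and $\mathbb E_{\mathrm Q}[X]\le\rho_{\mathcal Q}(X)$ for all $X\in\mathcal X$. *)

theory Defs
  imports "HOL-Probability.Probability"
begin

definition standing_filtration :: "'a measure \<Rightarrow> real \<Rightarrow> (real \<Rightarrow> 'a set set) \<Rightarrow> bool" where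
  "standing_filtration M T F \<longleftrightarrow>
     (\<forall>t\<in>{0..T}. sigma_algebra (space M) (F t)) \<and>
     (\<forall>s t. 0 \<le> s \<longrightarrow> s \<le> t \<longrightarrow> t \<le> T \<longrightarrow> F s \<subseteq> F t) \<and>
     (\<forall>t\<in>{0..<T}. F t = (\<Inter>s\<in>{t<..T}. F s)) \<and>
     F T = sets M \<and>
     (\<forall>A\<in>F 0. measure M A = 0 \<or> measure M A = 1) \<and>
     null_sets M \<subseteq> F 0"

definition stopping_times :: "'a measure \<Rightarrow> real \<Rightarrow> (real \<Rightarrow> 'a set set) \<Rightarrow> ('a \<Rightarrow> real) set" where
  "stopping_times M T F =
     {\<tau>. (\<forall>\<omega>\<in>space M. 0 \<le> \<tau> \<omega> \<and> \<tau> \<omega> \<le> T) \<and>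
          (\<forall>t\<in>{0..T}. {\<omega>\<in>space M. \<tau> \<omega> \<le> t} \<in> F t)}"

definition finite_stopping_times :: "'a measure \<Rightarrow> real \<Rightarrow> (real \<Rightarrow> 'a set set) \<Rightarrow> ('a \<Rightarrow> real) set" where
  "finite_stopping_times M T F = {\<tau>\<in>stopping_times M T F. finite (\<tau> ` space M)}"

definition quasi_left_usc :: "'a measure \<Rightarrow> real \<Rightarrow> (real \<Rightarrow> 'a set set) \<Rightarrow> (real \<Rightarrow> 'a \<Rightarrow> real) \<Rightarrow> bool" where
  "quasi_left_usc M T F Y \<longleftrightarrow>
     (\<forall>\<sigma> \<tau>. (\<forall>n. \<sigma> n \<in> stopping_times M T F) \<longrightarrow> \<tau> \<in> stopping_times M T F \<longrightarrow>
        (\<forall>\<omega>\<in>space M. incseq (\<lambda>n. \<sigma> n \<omega>) \<and> (\<lambda>n. \<sigma> n \<omega>) \<longlonglongrightarrow> \<tau> \<omega>) \<longrightarrow>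
        (AE \<omega> in M. limsup (\<lambda>n. ereal (Y (\<sigma> n \<omega>) \<omega>)) \<le> ereal (Y (\<tau> \<omega>) \<omega>)))"

definition admissible_process :: "'a measure \<Rightarrow> real \<Rightarrow> (real \<Rightarrow> 'a set set) \<Rightarrow> (real \<Rightarrow> 'a \<Rightarrow> real) \<Rightarrow> bool" where
  "admissible_process M T F Y \<longleftrightarrow>
     (\<forall>t\<in>{0..T}. Y t \<in> measurable (sigma (space M) (F t)) borel) \<and>
     (\<forall>\<omega>\<in>space M. \<forall>t\<in>{0..<T}. ((\<lambda>s. Y s \<omega>) \<longlongrightarrow> Y t \<omega>) (at_right t)) \<and>
     (\<forall>\<omega>\<in>space M. bounded ((\<lambda>t. Y t \<omega>) ` {0..T})) \<and>
     quasi_left_usc M T F Y"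

definition Ystar :: "real \<Rightarrow> (real \<Rightarrow> 'a \<Rightarrow> real) \<Rightarrow> 'a \<Rightarrow> real" where
  "Ystar T Y \<omega> = (SUP t\<in>{0..T}. \<bar>Y t \<omega>\<bar>)"

definition admissible_measures :: "'a measure \<Rightarrow> 'a measure set \<Rightarrow> bool" where
  "admissible_measures M Qs \<longleftrightarrow> Qs \<noteq> {} \<and>
     (\<forall>Q\<in>Qs. prob_space Q \<and> sets Q = sets M \<and> absolutely_continuous M Q)"

definition L1_Q :: "'a measure set \<Rightarrow> ('a \<Rightarrow> real) \<Rightarrow> bool" where
  "L1_Q Qs X \<longleftrightarrow> (\<forall>Q\<in>Qs. integrable Q X) \<and> (\<exists>C. \<forall>Q\<in>Qs. (\<integral>\<omega>. \<bar>X \<omega>\<bar> \<partial>Q) \<le> C)"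

definition Xset :: "'a measure \<Rightarrow> real \<Rightarrow> (real \<Rightarrow> 'a \<Rightarrow> real) \<Rightarrow> ('a \<Rightarrow> real) set" where
  "Xset M T Y = {X. X \<in> borel_measurable M \<and>
      (\<exists>C>0. AE \<omega> in M. \<bar>X \<omega>\<bar> \<le> C * (Ystar T Y \<omega> + 1))}"

definition rho :: "'a measure set \<Rightarrow> ('a \<Rightarrow> real) \<Rightarrow> ereal" where
  "rho Qs X = (SUP Q\<in>Qs. ereal (\<integral>\<omega>. X \<omega> \<partial>Q))"

definition rho_cont_above_0 :: "'a measure \<Rightarrow> real \<Rightarrow> (real \<Rightarrow> 'a \<Rightarrow> real) \<Rightarrow> 'a measure set \<Rightarrow> bool" where
  "rho_cont_above_0 M T Y Qs \<longleftrightarrow>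
     (\<forall>Xn. (\<forall>n. Xn n \<in> Xset M T Y) \<longrightarrow>
        (AE \<omega> in M. decseq (\<lambda>n. Xn n \<omega>) \<and> (\<lambda>n. Xn n \<omega>) \<longlonglongrightarrow> 0) \<longrightarrow>
        (\<lambda>n. rho Qs (Xn n)) \<longlonglongrightarrow> 0)"

definition Qbar :: "'a measure \<Rightarrow> real \<Rightarrow> (real \<Rightarrow> 'a \<Rightarrow> real) \<Rightarrow> 'a measure set \<Rightarrow> 'a measure set" where
  "Qbar M T Y Qs = {Q. prob_space Q \<and> sets Q = sets M \<and>
      (\<forall>X\<in>Xset M T Y. integrable Q X \<and> ereal (\<integral>\<omega>. X \<omega> \<partial>Q) \<le> rho Qs X)}"

end

theory Submission
  imports Defs
begin


lemma F_mono:
  assumes sf: "standing_filtration M T F" and "0 \<le> s" "s \<le> t" "t \<le> T"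
  shows "F s \<subseteq> F t"
  using assms unfolding standing_filtration_def by blast

lemma F_sets:
  assumes sf: "standing_filtration M T F" and "0 \<le> s" "s \<le> T"
  shows "F s \<subseteq> sets M"
  using F_mono[OF sf assms(2,3) order_refl] sf unfolding standing_filtration_def by simp

lemma Y_meas:
  assumes sf: "standing_filtration M T F" and ad: "admissible_process M T F Y" and g: "g \<in> {0..T}"
  shows "Y g \<in> borel_measurable M"
proof -
  have sa: "sigma_algebra (space M) (F g)" using sf g by (auto simp: standing_filtration_def)
  have sub: "F g \<subseteq> sets M" using F_sets[OF sf] g by auto
  have m: "Y g \<in> measurable (sigma (space M) (F g)) borel" using ad g by (auto simp: admissible_process_def)
  have sp: "space (sigma (space M) (F g)) = space M" by (simp add: space_measure_of_conv)
  have se: "sets (sigma (space M) (F g)) = F g" by (rule sigma_algebra.sets_measure_of_eq[OF sa])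
  show ?thesis using m sub unfolding measurable_def by (auto simp: sp se)
qed

lemma Ystar_bound:
  assumes ad: "admissible_process M T F Y" and w: "\<omega> \<in> space M" and t: "t \<in> {0..T}"
  shows "\<bar>Y t \<omega>\<bar> \<le> Ystar T Y \<omega>"
proof -
  have "bounded ((\<lambda>t. Y t \<omega>) ` {0..T})" using ad w by (auto simp: admissible_process_def)
  then obtain B where B: "\<forall>x\<in>(\<lambda>t. Y t \<omega>) ` {0..T}. norm x \<le> B" by (auto simp: bounded_iff)
  have "bdd_above ((\<lambda>t. \<bar>Y t \<omega>\<bar>) ` {0..T})" using B by (intro bdd_aboveI2[where M=B]) auto
  then show ?thesis unfolding Ystar_def using t by (rule cSUP_upper2) auto
qed

lemma rc_seq:
  fixes f :: "real \<Rightarrow> real"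
  assumes f: "(f \<longlongrightarrow> f t) (at_right t)" and ge: "\<And>n. t \<le> s n" and s: "s \<longlonglongrightarrow> t"
  shows "(\<lambda>n. f (s n)) \<longlonglongrightarrow> f t"
proof (rule tendstoI)
  fix e :: real assume e: "0 < e"
  have "eventually (\<lambda>x. dist (f x) (f t) < e) (at_right t)" using f e by (rule tendstoD)
  then obtain b where b: "b > t" and P: "\<And>y. y > t \<Longrightarrow> y < b \<Longrightarrow> dist (f y) (f t) < e"
    by (auto simp: eventually_at_right_field)
  have "eventually (\<lambda>n. dist (s n) t < b - t) sequentially" using s b by (intro tendstoD) auto
  then show "eventually (\<lambda>n. dist (f (s n)) (f t) < e) sequentially"
  proof (rule eventually_mono)
    fix n assume "dist (s n) t < b - t"
    then have "s n < b" by (auto simp: dist_real_def)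
    show "dist (f (s n)) (f t) < e"
    proof (cases "s n = t")
      case True then show ?thesis using e by simp
    next
      case False then show ?thesis using ge[of n] \<open>s n < b\<close> P by auto
    qed
  qed
qed

lemma tau_meas:
  assumes sf: "standing_filtration M T F" and tau: "\<tau> \<in> stopping_times M T F"
  shows "\<tau> \<in> borel_measurable M"
proof (rule borel_measurable_iff_le[THEN iffD2], intro allI)
  fix a :: real
  show "{w \<in> space M. \<tau> w \<le> a} \<in> sets M"
  proof (cases "a < 0")
    case True
    then have "{w \<in> space M. \<tau> w \<le> a} = {}" using tau by (force simp: stopping_times_def)
    then show ?thesis by (metis sets.empty_sets)
  next
    case False
    show ?thesis
    proof (cases "a \<le> T")
      case True
      then have "{w \<in> space M. \<tau> w \<le> a} \<in> F a" using tau False by (auto simp: stopping_times_def)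
      then show ?thesis using F_sets[OF sf, of a] False True by auto
    next
      case False2: False
      then have "{w \<in> space M. \<tau> w \<le> a} = space M" using tau by (force simp: stopping_times_def)
      then show ?thesis by (metis sets.top)
    qed
  qed
qed

lemma disc_iff:
  fixes c x t :: real assumes c: "c > 0"
  shows "real_of_int \<lceil>x * c\<rceil> / c \<le> t \<longleftrightarrow> x \<le> real_of_int \<lfloor>t * c\<rfloor> / c"
proof -
  have "real_of_int \<lceil>x * c\<rceil> / c \<le> t \<longleftrightarrow> real_of_int \<lceil>x * c\<rceil> \<le> t * c"
    using c by (simp add: divide_le_eq)
  also have "\<dots> \<longleftrightarrow> \<lceil>x * c\<rceil> \<le> \<lfloor>t * c\<rfloor>" by (simp add: le_floor_iff)
  also have "\<dots> \<longleftrightarrow> x * c \<le> real_of_int \<lfloor>t * c\<rfloor>" by (simp add: ceiling_le_iff)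
  also have "\<dots> \<longleftrightarrow> x \<le> real_of_int \<lfloor>t * c\<rfloor> / c" using c by (simp add: le_divide_eq)
  finally show ?thesis .
qed

lemma disc_ge:
  fixes c x :: real assumes c: "c > 0"
  shows "x \<le> real_of_int \<lceil>x * c\<rceil> / c" and "real_of_int \<lceil>x * c\<rceil> / c < x + 1 / c"
proof -
  have "x * c \<le> real_of_int \<lceil>x * c\<rceil>" by simp
  then show "x \<le> real_of_int \<lceil>x * c\<rceil> / c" using c by (simp add: le_divide_eq)
  have "real_of_int \<lceil>x * c\<rceil> < x * c + 1" by linarith
  then show "real_of_int \<lceil>x * c\<rceil> / c < x + 1 / c" using c by (simp add: divide_less_eq distrib_right)
qed

lemma approx:
  assumes Tpos: "0 < T" and sf: "standing_filtration M T F"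
    and ad: "admissible_process M T F Y" and rc: "rho_cont_above_0 M T Y Qs"
    and tau: "\<tau> \<in> stopping_times M T F" and e: "0 < e"
  shows "\<exists>\<sigma>\<in>finite_stopping_times M T F. \<forall>Q\<in>Qbar M T Y Qs.
     ereal (\<integral>\<omega>. Y (\<tau> \<omega>) \<omega> \<partial>Q) \<le> ereal (\<integral>\<omega>. Y (\<sigma> \<omega>) \<omega> \<partial>Q) + ereal e"
proof -
  define c :: "nat \<Rightarrow> real" where "c n = 2^n / T" for n
  define tn where "tn n \<omega> = real_of_int \<lceil>\<tau> \<omega> * c n\<rceil> / c n" for n \<omega>
  have cpos: "c n > 0" for n using Tpos by (simp add: c_def)
  have Tc: "T * c n = 2^n" for n using Tpos by (simp add: c_def)
  have tau01: "0 \<le> \<tau> \<omega> \<and> \<tau> \<omega> \<le> T" if "\<omega> \<in> space M" for \<omega>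
    using tau that by (auto simp: stopping_times_def)
  have tn_ge: "\<tau> \<omega> \<le> tn n \<omega>" for n \<omega> unfolding tn_def by (rule disc_ge(1)[OF cpos])
  have tn_lt: "tn n \<omega> < \<tau> \<omega> + 1 / c n" for n \<omega> unfolding tn_def by (rule disc_ge(2)[OF cpos])
  have tn_iff: "tn n \<omega> \<le> t \<longleftrightarrow> \<tau> \<omega> \<le> real_of_int \<lfloor>t * c n\<rfloor> / c n" for n \<omega> t
    unfolding tn_def by (rule disc_iff[OF cpos])
  define G where "G n = (\<lambda>k::int. real_of_int k / c n) ` {0..2^n}" for n
  have ceil_rng: "\<lceil>\<tau> \<omega> * c n\<rceil> \<in> {0..2^n}" if "\<omega> \<in> space M" for n \<omega>
  proof -
    have "0 \<le> \<tau> \<omega> * c n" using tau01[OF that] cpos[of n] by simp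
    moreover have "\<tau> \<omega> * c n \<le> 2^n" using tau01[OF that] cpos[of n] Tc[of n]
      by (metis mult_right_mono less_imp_le)
    ultimately show ?thesis by (auto simp: ceiling_le_iff)
  qed
  have tn_G: "tn n \<omega> \<in> G n" if "\<omega> \<in> space M" for n \<omega>
    using ceil_rng[OF that] unfolding tn_def G_def by auto
  have G_sub: "x \<in> {0..T}" if xG: "x \<in> G n" for x n
  proof -
    obtain k :: int where k: "k \<in> {0..2^n}" "x = real_of_int k / c n" using xG unfolding G_def image_iff by blast
    have "real_of_int k \<le> 2^n" using k(1) by simp
    then have "real_of_int k / c n \<le> 2^n / c n" using cpos[of n] by (simp add: divide_right_mono)
    also have "2^n / c n = T" using Tpos by (simp add: c_def)
    finally show ?thesis using k cpos[of n] by simp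
  qed
  have tn_01: "0 \<le> tn n \<omega> \<and> tn n \<omega> \<le> T" if "\<omega> \<in> space M" for n \<omega>
    using G_sub[OF tn_G[OF that]] by auto
  have finG: "finite (G n)" for n unfolding G_def by simp
  have tn_fst: "tn n \<in> finite_stopping_times M T F" for n
  proof -
    have "{\<omega>\<in>space M. tn n \<omega> \<le> t} \<in> F t" if t: "t \<in> {0..T}" for t
    proof -
      define s where "s = real_of_int \<lfloor>t * c n\<rfloor> / c n"
      have "0 \<le> t * c n" using t cpos[of n] by simp
      then have s0: "0 \<le> s" unfolding s_def using cpos[of n] by simp
      have "real_of_int \<lfloor>t * c n\<rfloor> \<le> t * c n" by simp
      then have st: "s \<le> t" unfolding s_def using cpos[of n] by (simp add: divide_le_eq)
      have "{\<omega>\<in>space M. tn n \<omega> \<le> t} = {\<omega>\<in>space M. \<tau> \<omega> \<le> s}" using tn_iff s_def by auto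
      also have "\<dots> \<in> F s" using tau s0 st t by (auto simp: stopping_times_def)
      finally show ?thesis using F_mono[OF sf s0 st] t by auto
    qed
    moreover have "finite (tn n ` space M)" using tn_G by (intro finite_subset[OF _ finG[of n]]) auto
    ultimately show ?thesis using tn_01 by (auto simp: finite_stopping_times_def stopping_times_def)
  qed
  have tau_m: "\<tau> \<in> borel_measurable M" by (rule tau_meas[OF sf tau])
  have tn_m: "tn n \<in> borel_measurable M" for n unfolding tn_def using tau_m by measurable
  have Ytn_m: "(\<lambda>\<omega>. Y (tn n \<omega>) \<omega>) \<in> borel_measurable M" for n
  proof (rule measurable_compose_countable'[where I="G n" and f=Y and g="tn n"])
    show "Y i \<in> borel_measurable M" if "i \<in> G n" for i using Y_meas[OF sf ad G_sub[OF that]] .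
    show "countable (G n)" using finG by (simp add: countable_finite)
    show "tn n \<in> M \<rightarrow>\<^sub>M count_space (G n)"
      unfolding measurable_count_space_eq2[OF finG]
    proof (intro conjI ballI)
      show "tn n \<in> space M \<rightarrow> G n" using tn_G by auto
      fix a show "tn n -` {a} \<inter> space M \<in> sets M" using tn_m[of n] by (rule measurable_sets) simp
    qed
  qed
  have conv: "(\<lambda>n. Y (tn n \<omega>) \<omega>) \<longlonglongrightarrow> Y (\<tau> \<omega>) \<omega>" if w: "\<omega> \<in> space M" for \<omega>
  proof (cases "\<tau> \<omega> < T")
    case True
    have rcY: "((\<lambda>s. Y s \<omega>) \<longlongrightarrow> Y (\<tau> \<omega>) \<omega>) (at_right (\<tau> \<omega>))"
      using ad w True tau01[OF w] by (auto simp: admissible_process_def)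
    have "(\<lambda>n. 1 / c n) \<longlonglongrightarrow> 0"
    proof -
      have "(\<lambda>n. T * (1/2) ^ n) \<longlonglongrightarrow> T * 0"
        by (intro tendsto_mult tendsto_const LIMSEQ_power_zero) auto
      moreover have "1 / c n = T * (1/2)^n" for n by (simp add: c_def power_one_over)
      ultimately show ?thesis by simp
    qed
    then have hub: "(\<lambda>n. \<tau> \<omega> + 1 / c n) \<longlonglongrightarrow> \<tau> \<omega>"
      using tendsto_add[OF tendsto_const, of _ 0 sequentially "\<tau> \<omega>"] by simp
    have "(\<lambda>n. tn n \<omega>) \<longlonglongrightarrow> \<tau> \<omega>"
    proof (rule real_tendsto_sandwich[where f="\<lambda>n. \<tau> \<omega>" and h="\<lambda>n. \<tau> \<omega> + 1 / c n"])
      show "(\<lambda>n. \<tau> \<omega> + 1 / c n) \<longlonglongrightarrow> \<tau> \<omega>" by (rule hub)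
      show "(\<lambda>n. \<tau> \<omega>) \<longlonglongrightarrow> \<tau> \<omega>" by simp
      show "\<forall>\<^sub>F n in sequentially. \<tau> \<omega> \<le> tn n \<omega>" using tn_ge by simp
      show "\<forall>\<^sub>F n in sequentially. tn n \<omega> \<le> \<tau> \<omega> + 1 / c n" using tn_lt by (intro always_eventually allI less_imp_le)
    qed
    then show ?thesis using rc_seq[OF rcY tn_ge] by simp
  next
    case False
    then have "tn n \<omega> = \<tau> \<omega>" for n using tn_ge[of \<omega> n] tn_01[OF w, of n] tau01[OF w] by auto
    then show ?thesis by simp
  qed
  have Ytau_m: "(\<lambda>\<omega>. Y (\<tau> \<omega>) \<omega>) \<in> borel_measurable M"
    by (rule borel_measurable_LIMSEQ_real[OF conv Ytn_m])
  define a where "a m \<omega> = \<bar>Y (tn m \<omega>) \<omega> - Y (\<tau> \<omega>) \<omega>\<bar>" for m \<omega>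
  define Z where "Z n \<omega> = (SUP m\<in>{n..}. a m \<omega>)" for n \<omega>
  have a_bd: "a m \<omega> \<le> 2 * Ystar T Y \<omega>" if w: "\<omega> \<in> space M" for m \<omega>
  proof -
    have "\<bar>Y (tn m \<omega>) \<omega>\<bar> \<le> Ystar T Y \<omega>" using Ystar_bound[OF ad w] tn_01[OF w] by auto
    moreover have "\<bar>Y (\<tau> \<omega>) \<omega>\<bar> \<le> Ystar T Y \<omega>" using Ystar_bound[OF ad w] tau01[OF w] by auto
    ultimately show ?thesis unfolding a_def by linarith
  qed
  have bdd: "bdd_above ((\<lambda>m. a m \<omega>) ` A)" if w: "\<omega> \<in> space M" for A \<omega>
    using a_bd[OF w] by (intro bdd_aboveI2) auto
  have Z_ge: "a m \<omega> \<le> Z n \<omega>" if w: "\<omega> \<in> space M" and "n \<le> m" for n m \<omega>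
    unfolding Z_def using that by (intro cSUP_upper bdd) auto
  have Z_le: "Z n \<omega> \<le> 2 * Ystar T Y \<omega>" if w: "\<omega> \<in> space M" for n \<omega>
    unfolding Z_def using a_bd[OF w] by (intro cSUP_least) auto
  have Z0: "0 \<le> Z n \<omega>" if w: "\<omega> \<in> space M" for n \<omega>
    using Z_ge[OF w, of n n] by (simp add: a_def)
  have a_m: "(\<lambda>\<omega>. a m \<omega>) \<in> borel_measurable M" for m
    unfolding a_def using Ytn_m[of m] Ytau_m by measurable
  have Z_m: "Z n \<in> borel_measurable M" for n
    unfolding Z_def[abs_def] by (rule borel_measurable_cSUP) (auto intro: a_m bdd)
  have Z_X: "Z n \<in> Xset M T Y" for n
    unfolding Xset_def
  proof (intro CollectI conjI exI[of _ 2] AE_I2 impI)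
    show "Z n \<in> borel_measurable M" by (rule Z_m)
    fix \<omega> assume w: "\<omega> \<in> space M"
    show "\<bar>Z n \<omega>\<bar> \<le> 2 * (Ystar T Y \<omega> + 1)" using Z0[OF w, of n] Z_le[OF w, of n] by simp
  qed simp
  have Z_dec: "decseq (\<lambda>n. Z n \<omega>)" if w: "\<omega> \<in> space M" for \<omega>
  proof (rule decseq_SucI)
    fix n show "Z (Suc n) \<omega> \<le> Z n \<omega>"
      unfolding Z_def by (rule cSUP_subset_mono) (auto intro: bdd[OF w])
  qed
  have Z_lim: "(\<lambda>n. Z n \<omega>) \<longlonglongrightarrow> 0" if w: "\<omega> \<in> space M" for \<omega>
  proof (rule tendstoI)
    fix r :: real assume r: "0 < r"
    have "(\<lambda>m. Y (tn m \<omega>) \<omega> - Y (\<tau> \<omega>) \<omega>) \<longlonglongrightarrow> 0"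
      using tendsto_diff[OF conv[OF w] tendsto_const[of "Y (\<tau> \<omega>) \<omega>"]] by simp
    then have "eventually (\<lambda>m. dist (Y (tn m \<omega>) \<omega> - Y (\<tau> \<omega>) \<omega>) 0 < r / 2) sequentially"
      using r by (intro tendstoD) auto
    then obtain N where N: "\<And>m. m \<ge> N \<Longrightarrow> a m \<omega> < r / 2"
      unfolding eventually_sequentially a_def by auto
    show "eventually (\<lambda>n. dist (Z n \<omega>) 0 < r) sequentially"
      unfolding eventually_sequentially
    proof (intro exI[of _ N] allI impI)
      fix n assume n: "N \<le> n"
      have "Z n \<omega> \<le> r / 2" unfolding Z_def using N n by (intro cSUP_least) (auto intro: less_imp_le)
      then show "dist (Z n \<omega>) 0 < r" using Z0[OF w, of n] r by simp
    qed
  qed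
  have rZ: "(\<lambda>n. rho Qs (Z n)) \<longlonglongrightarrow> 0"
    using rc Z_X Z_dec Z_lim unfolding rho_cont_above_0_def by (auto intro!: AE_I2)
  have "eventually (\<lambda>n. rho Qs (Z n) < ereal e) sequentially"
    using rZ e by (intro order_tendstoD(2)) (auto simp: zero_ereal_def)
  then obtain n where n: "rho Qs (Z n) < ereal e" unfolding eventually_sequentially by auto
  have Ytau_X: "(\<lambda>\<omega>. Y (\<tau> \<omega>) \<omega>) \<in> Xset M T Y"
    unfolding Xset_def
  proof (intro CollectI conjI exI[of _ 1] AE_I2 impI)
    fix \<omega> assume w: "\<omega> \<in> space M"
    show "\<bar>Y (\<tau> \<omega>) \<omega>\<bar> \<le> 1 * (Ystar T Y \<omega> + 1)" using Ystar_bound[OF ad w, of "\<tau> \<omega>"] tau01[OF w] by simp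
  qed (auto intro: Ytau_m)
  have Ytn_X: "(\<lambda>\<omega>. Y (tn n \<omega>) \<omega>) \<in> Xset M T Y"
    unfolding Xset_def
  proof (intro CollectI conjI exI[of _ 1] AE_I2 impI)
    fix \<omega> assume w: "\<omega> \<in> space M"
    show "\<bar>Y (tn n \<omega>) \<omega>\<bar> \<le> 1 * (Ystar T Y \<omega> + 1)" using Ystar_bound[OF ad w, of "tn n \<omega>"] tn_01[OF w, of n] by simp
  qed (auto intro: Ytn_m)
  show ?thesis
  proof (intro bexI[of _ "tn n"] ballI)
    fix Q assume Q: "Q \<in> Qbar M T Y Qs"
    have seQ: "sets Q = sets M" using Q unfolding Qbar_def by blast
    have sQ: "space Q = space M" using seQ by (rule sets_eq_imp_space_eq)
    have i1: "integrable Q (\<lambda>\<omega>. Y (\<tau> \<omega>) \<omega>)" using Q Ytau_X by (auto simp: Qbar_def)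
    have i2: "integrable Q (\<lambda>\<omega>. Y (tn n \<omega>) \<omega>)" using Q Ytn_X by (auto simp: Qbar_def)
    have i3: "integrable Q (Z n)" and r3: "ereal (integral\<^sup>L Q (Z n)) \<le> rho Qs (Z n)"
      using Q Z_X[of n] by (auto simp: Qbar_def)
    have "(\<integral>\<omega>. Y (\<tau> \<omega>) \<omega> \<partial>Q) - (\<integral>\<omega>. Y (tn n \<omega>) \<omega> \<partial>Q)
        = (\<integral>\<omega>. Y (\<tau> \<omega>) \<omega> - Y (tn n \<omega>) \<omega> \<partial>Q)" using i1 i2 by simp
    also have "\<dots> \<le> integral\<^sup>L Q (Z n)"
    proof (rule integral_mono)
      show "integrable Q (\<lambda>\<omega>. Y (\<tau> \<omega>) \<omega> - Y (tn n \<omega>) \<omega>)" using i1 i2 by simp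
      show "integrable Q (Z n)" by (rule i3)
      fix \<omega> assume "\<omega> \<in> space Q"
      then have w: "\<omega> \<in> space M" using sQ by simp
      show "Y (\<tau> \<omega>) \<omega> - Y (tn n \<omega>) \<omega> \<le> Z n \<omega>" using Z_ge[OF w, of n n] by (simp add: a_def)
    qed
    finally have d: "(\<integral>\<omega>. Y (\<tau> \<omega>) \<omega> \<partial>Q) - (\<integral>\<omega>. Y (tn n \<omega>) \<omega> \<partial>Q) \<le> integral\<^sup>L Q (Z n)" .
    have "integral\<^sup>L Q (Z n) < e" using order.strict_trans1[OF r3 n] by simp
    then show "ereal (\<integral>\<omega>. Y (\<tau> \<omega>) \<omega> \<partial>Q) \<le> ereal (\<integral>\<omega>. Y (tn n \<omega>) \<omega> \<partial>Q) + ereal e"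
      using d by simp
  qed (rule tn_fst)
qed

lemma ereal_shift1: "(a::ereal) \<le> b + ereal e \<Longrightarrow> a - ereal e \<le> b"
  by (simp add: ereal_minus_le_iff)
lemma ereal_shift2: "(a::ereal) - ereal e \<le> c \<Longrightarrow> a \<le> c + ereal e"
  by (simp add: ereal_minus_le_iff)

theorem lemma6p6:
  fixes M :: "'a measure" and T :: real and F :: "real \<Rightarrow> 'a set set"
    and Qs :: "'a measure set" and Y :: "real \<Rightarrow> 'a \<Rightarrow> real"
  assumes "prob_space M" and "0 < T"
    and "standing_filtration M T F"
    and "admissible_measures M Qs"
    and "admissible_process M T F Y"
    and "L1_Q Qs (Ystar T Y)"
    and "rho_cont_above_0 M T Y Qs"
  shows "((SUP \<tau>\<in>stopping_times M T F. INF Q\<in>Qbar M T Y Qs. ereal (\<integral>\<omega>. Y (\<tau> \<omega>) \<omega> \<partial>Q))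
       = (SUP \<tau>\<in>finite_stopping_times M T F. INF Q\<in>Qbar M T Y Qs. ereal (\<integral>\<omega>. Y (\<tau> \<omega>) \<omega> \<partial>Q)))
     \<and> ((INF Q\<in>Qbar M T Y Qs. SUP \<tau>\<in>stopping_times M T F. ereal (\<integral>\<omega>. Y (\<tau> \<omega>) \<omega> \<partial>Q))
       = (INF Q\<in>Qbar M T Y Qs. SUP \<tau>\<in>finite_stopping_times M T F. ereal (\<integral>\<omega>. Y (\<tau> \<omega>) \<omega> \<partial>Q)))"
proof -
  note ap = approx[OF assms(2,3,5,7)]
  have sub: "finite_stopping_times M T F \<subseteq> stopping_times M T F"
    by (auto simp: finite_stopping_times_def)
  define E where "E \<tau> Q = ereal (\<integral>\<omega>. Y (\<tau> \<omega>) \<omega> \<partial>Q)" for \<tau> :: "'a \<Rightarrow> real" and Q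
  have i: "(SUP \<tau>\<in>stopping_times M T F. INF Q\<in>Qbar M T Y Qs. E \<tau> Q)
       = (SUP \<tau>\<in>finite_stopping_times M T F. INF Q\<in>Qbar M T Y Qs. E \<tau> Q)"
  proof (rule antisym)
    show "(SUP \<tau>\<in>stopping_times M T F. INF Q\<in>Qbar M T Y Qs. E \<tau> Q)
       \<le> (SUP \<tau>\<in>finite_stopping_times M T F. INF Q\<in>Qbar M T Y Qs. E \<tau> Q)"
    proof (rule SUP_least)
      fix \<tau> assume tau: "\<tau> \<in> stopping_times M T F"
      show "(INF Q\<in>Qbar M T Y Qs. E \<tau> Q) \<le> (SUP \<tau>\<in>finite_stopping_times M T F. INF Q\<in>Qbar M T Y Qs. E \<tau> Q)"
      proof (rule ereal_le_epsilon2)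
        fix e :: real assume e: "0 < e"
        obtain \<sigma> where s: "\<sigma> \<in> finite_stopping_times M T F"
          and le: "\<And>Q. Q \<in> Qbar M T Y Qs \<Longrightarrow> E \<tau> Q \<le> E \<sigma> Q + ereal e"
          using ap[OF tau e] unfolding E_def by blast
        have "(INF Q\<in>Qbar M T Y Qs. E \<tau> Q) - ereal e \<le> (INF Q\<in>Qbar M T Y Qs. E \<sigma> Q)"
        proof (rule INF_greatest)
          fix Q assume Q: "Q \<in> Qbar M T Y Qs"
          have "(INF Q\<in>Qbar M T Y Qs. E \<tau> Q) \<le> E \<sigma> Q + ereal e"
            using INF_lower[OF Q, of "E \<tau>"] le[OF Q] by (rule order_trans)
          then show "(INF Q\<in>Qbar M T Y Qs. E \<tau> Q) - ereal e \<le> E \<sigma> Q" by (rule ereal_shift1)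
        qed
        also have "\<dots> \<le> (SUP \<tau>\<in>finite_stopping_times M T F. INF Q\<in>Qbar M T Y Qs. E \<tau> Q)"
          using s by (rule SUP_upper)
        finally show "(INF Q\<in>Qbar M T Y Qs. E \<tau> Q)
            \<le> (SUP \<tau>\<in>finite_stopping_times M T F. INF Q\<in>Qbar M T Y Qs. E \<tau> Q) + ereal e"
          by (rule ereal_shift2)
      qed
    qed
    show "(SUP \<tau>\<in>finite_stopping_times M T F. INF Q\<in>Qbar M T Y Qs. E \<tau> Q)
       \<le> (SUP \<tau>\<in>stopping_times M T F. INF Q\<in>Qbar M T Y Qs. E \<tau> Q)"
      using sub by (rule SUP_subset_mono) simp
  qed
  have ii: "(SUP \<tau>\<in>stopping_times M T F. E \<tau> Q) = (SUP \<tau>\<in>finite_stopping_times M T F. E \<tau> Q)"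
    if Q: "Q \<in> Qbar M T Y Qs" for Q
  proof (rule antisym)
    show "(SUP \<tau>\<in>stopping_times M T F. E \<tau> Q) \<le> (SUP \<tau>\<in>finite_stopping_times M T F. E \<tau> Q)"
    proof (rule SUP_least)
      fix \<tau> assume tau: "\<tau> \<in> stopping_times M T F"
      show "E \<tau> Q \<le> (SUP \<tau>\<in>finite_stopping_times M T F. E \<tau> Q)"
      proof (rule ereal_le_epsilon2)
        fix e :: real assume e: "0 < e"
        obtain \<sigma> where s: "\<sigma> \<in> finite_stopping_times M T F"
          and le: "\<And>Q. Q \<in> Qbar M T Y Qs \<Longrightarrow> E \<tau> Q \<le> E \<sigma> Q + ereal e"
          using ap[OF tau e] unfolding E_def by blast
        have "E \<sigma> Q \<le> (SUP \<tau>\<in>finite_stopping_times M T F. E \<tau> Q)" using s by (rule SUP_upper)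
        then show "E \<tau> Q \<le> (SUP \<tau>\<in>finite_stopping_times M T F. E \<tau> Q) + ereal e"
          using le[OF Q] by (meson add_right_mono order_trans)
      qed
    qed
    show "(SUP \<tau>\<in>finite_stopping_times M T F. E \<tau> Q) \<le> (SUP \<tau>\<in>stopping_times M T F. E \<tau> Q)"
      using sub by (rule SUP_subset_mono) simp
  qed
  have ii': "(INF Q\<in>Qbar M T Y Qs. SUP \<tau>\<in>stopping_times M T F. E \<tau> Q)
       = (INF Q\<in>Qbar M T Y Qs. SUP \<tau>\<in>finite_stopping_times M T F. E \<tau> Q)"
    using ii by (rule INF_cong[OF refl])
  show ?thesis using i ii' unfolding E_def by simp
qed

end
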